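(* Let $n,m\ge 3$ and let $G=P_n\square P_m$ be the grid graph. For every $k\ge 3$, no $k$-minimal of $G$ contains more than one corner vertex.
   Context: The grid graph $P_n\square P_m$ has vertex set $\{(i,j):0\le i\le n-1,\ 0\le j\le m-1\}$, with $(i,j)$ adjacent to $(k,l)$ iff $|i-k|+|j-l|=1$; distance $d((i,j),(k,l))=|i-k|+|j-l|$. A vertex $w$ resolves $u,v$ if $d(w,u)\ne d(w,v)$; a set $R$ is resolving if every pair of distinct vertices is resolved by some vertex of $R$; a $k$-minimal is a resolving set $R$ of cardinality $k$ such that no $R\setminus\{x\}$, $x\in R$, is resolving. Corner vertices are the vertices of degree 2, namely $(0,0),(n-1,0),(0,m-1),(n-1,m-1)$. *)

theory Defs
  imports Main
begin

definition grid_vertices :: "nat \<Rightarrow> nat \<Rightarrow> (nat \<times> nat) set" where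
  "grid_vertices n m = {(i, j). i < n \<and> j < m}"

definition grid_dist :: "nat \<times> nat \<Rightarrow> nat \<times> nat \<Rightarrow> nat" where
  "grid_dist u v = nat \<bar>int (fst u) - int (fst v)\<bar> + nat \<bar>int (snd u) - int (snd v)\<bar>"

definition resolves :: "nat \<times> nat \<Rightarrow> nat \<times> nat \<Rightarrow> nat \<times> nat \<Rightarrow> bool" where
  "resolves w u v \<longleftrightarrow> grid_dist w u \<noteq> grid_dist w v"

definition resolving_set :: "nat \<Rightarrow> nat \<Rightarrow> (nat \<times> nat) set \<Rightarrow> bool" where
  "resolving_set n m R \<longleftrightarrow> R \<subseteq> grid_vertices n m \<and>
     (\<forall>u\<in>grid_vertices n m. \<forall>v\<in>grid_vertices n m. u \<noteq> v \<longrightarrow> (\<exists>w\<in>R. resolves w u v))"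

definition k_minimal :: "nat \<Rightarrow> nat \<Rightarrow> nat \<Rightarrow> (nat \<times> nat) set \<Rightarrow> bool" where
  "k_minimal n m k R \<longleftrightarrow> resolving_set n m R \<and> finite R \<and> card R = k \<and>
     (\<forall>x\<in>R. \<not> resolving_set n m (R - {x}))"

definition corners :: "nat \<Rightarrow> nat \<Rightarrow> (nat \<times> nat) set" where
  "corners n m = {(0, 0), (n - 1, 0), (0, m - 1), (n - 1, m - 1)}"

end

theory Submission
  imports Defs
begin

lemma gd: "grid_dist (a,b) (i,j) = nat \<bar>int a - int i\<bar> + nat \<bar>int b - int j\<bar>"
  by (simp add: grid_dist_def)

lemma opp_gen:
  assumes "resolving_set n m R" "c \<in> R" "c' \<in> R" "c \<noteq> c'"
    and "\<And>u v. u \<in> grid_vertices n m \<Longrightarrow> v \<in> grid_vertices n m \<Longrightarrow> resolves c' u v \<Longrightarrow> resolves c u v"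
  shows "resolving_set n m (R - {c'})"
  using assms unfolding resolving_set_def by (metis Diff_iff Diff_subset empty_iff insert_iff order_trans)

lemma adj_gen:
  assumes "resolving_set n m R" "c \<in> R" "c' \<in> R" "x \<in> R" "x \<noteq> c" "x \<noteq> c'"
    and "\<And>u v. u \<in> grid_vertices n m \<Longrightarrow> v \<in> grid_vertices n m \<Longrightarrow> u \<noteq> v \<Longrightarrow> resolves c u v \<or> resolves c' u v"
  shows "resolving_set n m (R - {x})"
  using assms unfolding resolving_set_def by (metis Diff_iff Diff_subset singletonD order_trans)

lemma opp1: "u \<in> grid_vertices n m \<Longrightarrow> v \<in> grid_vertices n m \<Longrightarrow> resolves (n-1,m-1) u v \<Longrightarrow> resolves (0,0) u v"
  by (cases u; cases v; auto simp: resolves_def grid_vertices_def gd)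
lemma opp2: "u \<in> grid_vertices n m \<Longrightarrow> v \<in> grid_vertices n m \<Longrightarrow> resolves (0,0) u v \<Longrightarrow> resolves (n-1,m-1) u v"
  by (cases u; cases v; auto simp: resolves_def grid_vertices_def gd)
lemma opp3: "u \<in> grid_vertices n m \<Longrightarrow> v \<in> grid_vertices n m \<Longrightarrow> resolves (n-1,0) u v \<Longrightarrow> resolves (0,m-1) u v"
  by (cases u; cases v; auto simp: resolves_def grid_vertices_def gd)
lemma opp4: "u \<in> grid_vertices n m \<Longrightarrow> v \<in> grid_vertices n m \<Longrightarrow> resolves (0,m-1) u v \<Longrightarrow> resolves (n-1,0) u v"
  by (cases u; cases v; auto simp: resolves_def grid_vertices_def gd)

lemma adj1: "u \<in> grid_vertices n m \<Longrightarrow> v \<in> grid_vertices n m \<Longrightarrow> u \<noteq> v \<Longrightarrow> resolves (0,0) u v \<or> resolves (n-1,0) u v"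
  by (cases u; cases v; auto simp: resolves_def grid_vertices_def gd)
lemma adj2: "u \<in> grid_vertices n m \<Longrightarrow> v \<in> grid_vertices n m \<Longrightarrow> u \<noteq> v \<Longrightarrow> resolves (0,0) u v \<or> resolves (0,m-1) u v"
  by (cases u; cases v; auto simp: resolves_def grid_vertices_def gd)
lemma adj3: "u \<in> grid_vertices n m \<Longrightarrow> v \<in> grid_vertices n m \<Longrightarrow> u \<noteq> v \<Longrightarrow> resolves (n-1,m-1) u v \<or> resolves (n-1,0) u v"
  by (cases u; cases v; auto simp: resolves_def grid_vertices_def gd)
lemma adj4: "u \<in> grid_vertices n m \<Longrightarrow> v \<in> grid_vertices n m \<Longrightarrow> u \<noteq> v \<Longrightarrow> resolves (n-1,m-1) u v \<or> resolves (0,m-1) u v"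
  by (cases u; cases v; auto simp: resolves_def grid_vertices_def gd)

lemma ball_opp:
  "\<forall>u\<in>grid_vertices n m. \<forall>v\<in>grid_vertices n m. resolves (n-1,m-1) u v \<longrightarrow> resolves (0,0) u v"
  "\<forall>u\<in>grid_vertices n m. \<forall>v\<in>grid_vertices n m. resolves (0,0) u v \<longrightarrow> resolves (n-1,m-1) u v"
  "\<forall>u\<in>grid_vertices n m. \<forall>v\<in>grid_vertices n m. resolves (n-1,0) u v \<longrightarrow> resolves (0,m-1) u v"
  "\<forall>u\<in>grid_vertices n m. \<forall>v\<in>grid_vertices n m. resolves (0,m-1) u v \<longrightarrow> resolves (n-1,0) u v"
  using opp1 opp2 opp3 opp4 by blast+

lemma ball_adj:
  "\<forall>u\<in>grid_vertices n m. \<forall>v\<in>grid_vertices n m. u \<noteq> v \<longrightarrow> resolves (0,0) u v \<or> resolves (n-1,0) u v"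
  "\<forall>u\<in>grid_vertices n m. \<forall>v\<in>grid_vertices n m. u \<noteq> v \<longrightarrow> resolves (n-1,0) u v \<or> resolves (0,0) u v"
  "\<forall>u\<in>grid_vertices n m. \<forall>v\<in>grid_vertices n m. u \<noteq> v \<longrightarrow> resolves (0,0) u v \<or> resolves (0,m-1) u v"
  "\<forall>u\<in>grid_vertices n m. \<forall>v\<in>grid_vertices n m. u \<noteq> v \<longrightarrow> resolves (0,m-1) u v \<or> resolves (0,0) u v"
  "\<forall>u\<in>grid_vertices n m. \<forall>v\<in>grid_vertices n m. u \<noteq> v \<longrightarrow> resolves (n-1,m-1) u v \<or> resolves (n-1,0) u v"
  "\<forall>u\<in>grid_vertices n m. \<forall>v\<in>grid_vertices n m. u \<noteq> v \<longrightarrow> resolves (n-1,0) u v \<or> resolves (n-1,m-1) u v"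
  "\<forall>u\<in>grid_vertices n m. \<forall>v\<in>grid_vertices n m. u \<noteq> v \<longrightarrow> resolves (n-1,m-1) u v \<or> resolves (0,m-1) u v"
  "\<forall>u\<in>grid_vertices n m. \<forall>v\<in>grid_vertices n m. u \<noteq> v \<longrightarrow> resolves (0,m-1) u v \<or> resolves (n-1,m-1) u v"
  using adj1 adj2 adj3 adj4 by blast+

lemma key:
  assumes "c \<in> corners n m" "c' \<in> corners n m" "c \<noteq> c'" "n \<ge> 2" "m \<ge> 2"
  shows "(\<forall>u\<in>grid_vertices n m. \<forall>v\<in>grid_vertices n m. resolves c' u v \<longrightarrow> resolves c u v)
       \<or> (\<forall>u\<in>grid_vertices n m. \<forall>v\<in>grid_vertices n m. u \<noteq> v \<longrightarrow> resolves c u v \<or> resolves c' u v)"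
proof -
  have a: "n - 1 \<noteq> 0" "m - 1 \<noteq> 0" using assms(4,5) by auto
  have h1: "c = (0,0) \<or> c = (n-1,0) \<or> c = (0,m-1) \<or> c = (n-1,m-1)" using assms(1) unfolding corners_def by blast
  have h2: "c' = (0,0) \<or> c' = (n-1,0) \<or> c' = (0,m-1) \<or> c' = (n-1,m-1)" using assms(2) unfolding corners_def by blast
  from h1 h2 assms(3) a show ?thesis
    apply (elim disjE)
    apply (simp_all only: prod.inject simp_thms)
    by ((rule disjI1, rule ball_opp) | (rule disjI2, rule ball_adj))+
qed

theorem proposition1:
  fixes n m k :: nat and R :: "(nat \<times> nat) set"
  assumes "n \<ge> 3" and "m \<ge> 3" and "k \<ge> 3"
    and "k_minimal n m k R"
  shows "card (R \<inter> corners n m) \<le> 1"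
proof (rule ccontr)
  assume "\<not> ?thesis"
  hence c2: "card (R \<inter> corners n m) \<ge> 2" by simp
  have fin: "finite R" and cR: "card R = k" and rs: "resolving_set n m R"
    and mn: "\<forall>x\<in>R. \<not> resolving_set n m (R - {x})"
    using assms(4) unfolding k_minimal_def by auto
  obtain c c' where cc: "c \<in> R \<inter> corners n m" "c' \<in> R \<inter> corners n m" "c \<noteq> c'"
    using c2 by (metis One_nat_def Suc_1 card_le_Suc0_iff_eq finite_Int fin not_less_eq_eq)
  have "card {c, c'} = 2" using cc(3) by simp
  hence lt: "card {c,c'} < card R" using cR assms(3) by simp
  have sub: "{c,c'} \<subseteq> R" using cc by auto
  obtain x where x: "x \<in> R" "x \<noteq> c" "x \<noteq> c'"
  proof (rule ccontr)
    assume "\<not> thesis"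
    hence "R \<subseteq> {c,c'}" using that by blast
    hence "R = {c,c'}" using sub by blast
    thus False using lt by simp
  qed
  have cR': "c \<in> R" "c' \<in> R" using cc by auto
  have n2: "n \<ge> 2" "m \<ge> 2" using assms(1,2) by auto
  have "c \<in> corners n m" "c' \<in> corners n m" using cc by auto
  from key[OF this cc(3) n2] show False
  proof
    assume "\<forall>u\<in>grid_vertices n m. \<forall>v\<in>grid_vertices n m. resolves c' u v \<longrightarrow> resolves c u v"
    hence "resolving_set n m (R - {c'})" using opp_gen[OF rs cR'(1) cR'(2) cc(3)] by blast
    thus False using mn cR' by blast
  next
    assume "\<forall>u\<in>grid_vertices n m. \<forall>v\<in>grid_vertices n m. u \<noteq> v \<longrightarrow> resolves c u v \<or> resolves c' u v"
    hence "resolving_set n m (R - {x})" using adj_gen[OF rs cR' x] by blast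
    thus False using mn x by blast
  qed
qed

end
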